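(* Let $X$ and $Y$ be finite topological spaces and give $X\times Y$ the product topology. Then for all $(a,b),(c,d)\in X\times Y$, $$\Psi_{X\times Y}((a,b),(c,d))=\Psi_X(a,c)\,|U_{[d]}|+\Psi_Y(b,d)\,|U_{[c]}|-\Psi_X(a,c)\,\Psi_Y(b,d),$$ where $U_{[c]}$ is the minimal open set of $[c]$ in the quotient space $X/{\sim}$ and $U_{[d]}$ is the minimal open set of $[d]$ in $Y/{\sim}$.
   Context: For a finite topological space $X$ and $x\in X$, $U_x$ denotes the minimal open set containing $x$ (the intersection of all open sets containing $x$). A nested sequence of open sets around $x$ is a finite sequence $U_0\subsetneq U_1\subsetneq\cdots\subsetneq U_m=X$ of open sets with $U_0=U_x$ such that for each $j$ there is no open set $V$ with $U_j\subsetneq V\subsetneq U_{j+1}$. The furtherness function $\Psi_X:X\times X\to\{0,1,\dots,|X|-1\}$ is defined by: $\Psi_X(x,y)$ is the smallest integer $k\ge 0$ such that there exists a nested sequence $(U_j)_{j\ge0}$ of open sets around $x$ with $y\in U_k$. For a finite space $X$, $\sim$ is the equivalence relation $x\sim y$ iff $\Psi_X(x,y)=\Psi_X(y,x)=0$ (equivalently $U_x=U_y$), and $X/{\sim}$ carries the quotient topology; in it $U_{[c]}=\{[y]\mid y\in U_c\}$, so $|U_{[c]}|$ is the number of $\sim$-classes meeting $U_c$. *)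

theory Defs
  imports "HOL-Analysis.Analysis"
begin

definition minopen :: "'a topology \<Rightarrow> 'a \<Rightarrow> 'a set" where
  "minopen X x = \<Inter> {V. openin X V \<and> x \<in> V}"

definition nested_seq :: "'a topology \<Rightarrow> 'a \<Rightarrow> 'a set list \<Rightarrow> bool" where
  "nested_seq X x us \<longleftrightarrow>
     us \<noteq> [] \<and> us ! 0 = minopen X x \<and> last us = topspace X \<and>
     (\<forall>j < length us. openin X (us ! j)) \<and>
     (\<forall>j. Suc j < length us \<longrightarrow>
        us ! j \<subset> us ! Suc j \<and>
        \<not> (\<exists>V. openin X V \<and> us ! j \<subset> V \<and> V \<subset> us ! Suc j))"

definition Psi :: "'a topology \<Rightarrow> 'a \<Rightarrow> 'a \<Rightarrow> nat" where
  "Psi X x y = (LEAST k. \<exists>us. nested_seq X x us \<and> k < length us \<and> y \<in> us ! k)"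

definition psi_sim :: "'a topology \<Rightarrow> 'a \<Rightarrow> 'a \<Rightarrow> bool" where
  "psi_sim X x y \<longleftrightarrow> Psi X x y = 0 \<and> Psi X y x = 0"

definition sim_class :: "'a topology \<Rightarrow> 'a \<Rightarrow> 'a set" where
  "sim_class X x = {y \<in> topspace X. psi_sim X x y}"

text \<open>Minimal open set of [c] in the quotient X/~ : U_[c] = {[y] | y \<in> U_c}.\<close>
definition quot_minopen :: "'a topology \<Rightarrow> 'a \<Rightarrow> 'a set set" where
  "quot_minopen X c = sim_class X ` minopen X c"

end

theory Submission
  imports Defs
begin

definition EC :: "'a topology \<Rightarrow> 'a \<Rightarrow> 'a set" where
  "EC X x = {y \<in> topspace X. minopen X y = minopen X x}"

definition covers :: "'a topology \<Rightarrow> 'a set \<Rightarrow> 'a set \<Rightarrow> bool" where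
  "covers X U V \<longleftrightarrow> openin X U \<and> openin X V \<and> U \<subset> V \<and>
     \<not> (\<exists>W. openin X W \<and> U \<subset> W \<and> W \<subset> V)"

fun cch :: "'a topology \<Rightarrow> 'a set list \<Rightarrow> bool" where
  "cch X [] = False"
| "cch X [U] = openin X U"
| "cch X (U # V # r) = (covers X U V \<and> cch X (V # r))"

lemma cch_iff:
  "cch X us \<longleftrightarrow> us \<noteq> [] \<and> (\<forall>j < length us. openin X (us ! j)) \<and>
     (\<forall>j. Suc j < length us \<longrightarrow>
        us ! j \<subset> us ! Suc j \<and>
        \<not> (\<exists>V. openin X V \<and> us ! j \<subset> V \<and> V \<subset> us ! Suc j))"
proof (induction X us rule: cch.induct)
  case (1 X)
  then show ?case by simp
next
  case (2 X U)
  then show ?case by simp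
next
  case (3 X U V r)
  have e1: "(\<forall>j < length (U#V#r). openin X ((U#V#r) ! j)) \<longleftrightarrow>
      openin X U \<and> (\<forall>j < length (V#r). openin X ((V#r) ! j))"
    by (simp only: length_Cons All_less_Suc2[of "length r"] All_less_Suc2[of "Suc (length r)"]) simp
  have e2: "(\<forall>j. Suc j < length (U#V#r) \<longrightarrow> P ((U#V#r) ! j) ((U#V#r) ! Suc j)) \<longleftrightarrow>
      P U V \<and> (\<forall>j. Suc j < length (V#r) \<longrightarrow> P ((V#r) ! j) ((V#r) ! Suc j))" for P
  proof -
    have "(\<forall>j. Suc j < length (U#V#r) \<longrightarrow> P ((U#V#r) ! j) ((U#V#r) ! Suc j)) \<longleftrightarrow>
          (\<forall>j < Suc (length r). P ((U#V#r) ! j) ((U#V#r) ! Suc j))" by auto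
    also have "\<dots> \<longleftrightarrow> P U V \<and> (\<forall>j < length r. P ((V#r) ! j) ((V#r) ! Suc j))"
      by (subst All_less_Suc2) simp
    also have "\<dots> \<longleftrightarrow> P U V \<and> (\<forall>j. Suc j < length (V#r) \<longrightarrow> P ((V#r) ! j) ((V#r) ! Suc j))"
      by auto
    finally show ?thesis .
  qed
  show ?case
    unfolding cch.simps 3 e1 e2[of "\<lambda>A B. A \<subset> B \<and> \<not> (\<exists>V. openin X V \<and> A \<subset> V \<and> V \<subset> B)"]
    unfolding covers_def by auto
qed

lemma nested_seq_cch:
  "nested_seq X x us \<longleftrightarrow> cch X us \<and> hd us = minopen X x \<and> last us = topspace X"
  unfolding nested_seq_def cch_iff by (auto simp: hd_conv_nth)

lemma cch_append:
  "cch X us \<Longrightarrow> cch X vs \<Longrightarrow> last us = hd vs \<Longrightarrow>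
    cch X (us @ tl vs) \<and> last (us @ tl vs) = last vs \<and> hd (us @ tl vs) = hd us"
proof (induction X us rule: cch.induct)
  case (1 X)
  then show ?case by simp
next
  case (2 X U)
  then show ?case by (cases vs) auto
next
  case (3 X U V r)
  then show ?case by auto
qed

context
  fixes X :: "'a topology"
  assumes fin: "finite (topspace X)"
begin

lemma mo_open: "x \<in> topspace X \<Longrightarrow> openin X (minopen X x)"
  unfolding minopen_def
proof (rule openin_Inter)
  show "finite {V. openin X V \<and> x \<in> V}"
    by (rule finite_subset[of _ "Pow (topspace X)"]) (auto dest: openin_subset simp: fin)
qed auto

lemma mo_mem: "x \<in> topspace X \<Longrightarrow> x \<in> minopen X x"
  unfolding minopen_def by auto

lemma mo_least: "openin X V \<Longrightarrow> x \<in> V \<Longrightarrow> minopen X x \<subseteq> V"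
  unfolding minopen_def by auto

lemma mo_sub: "x \<in> topspace X \<Longrightarrow> minopen X x \<subseteq> topspace X"
  by (rule mo_least) auto

lemma mo_mono: "x \<in> topspace X \<Longrightarrow> y \<in> minopen X x \<Longrightarrow> minopen X y \<subseteq> minopen X x"
  by (rule mo_least[OF mo_open]) auto

lemma EC_eq: "x \<in> topspace X \<Longrightarrow> y \<in> topspace X \<Longrightarrow> EC X x = EC X y \<longleftrightarrow> minopen X x = minopen X y"
  unfolding EC_def by auto

lemma EC_mem: "x \<in> topspace X \<Longrightarrow> x \<in> EC X x"
  unfolding EC_def by auto

lemma sat: "openin X V \<Longrightarrow> z \<in> topspace X \<Longrightarrow> w \<in> V \<Longrightarrow> EC X z = EC X w \<Longrightarrow> z \<in> V"
  by (metis EC_eq mo_least mo_mem openin_subset subsetD)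


lemma minim_class:
  assumes "z \<in> topspace X" "\<forall>w\<in>D. card (minopen X z) \<le> card (minopen X w)"
    "w \<in> D" "w \<in> minopen X z"
  shows "minopen X w = minopen X z"
proof -
  have s: "minopen X w \<subseteq> minopen X z" using mo_mono assms by blast
  have f: "finite (minopen X z)" using mo_sub[OF assms(1)] fin finite_subset by blast
  have "card (minopen X w) \<le> card (minopen X z)" using card_mono[OF f s] .
  moreover have "card (minopen X z) \<le> card (minopen X w)" using assms by blast
  ultimately show ?thesis using card_subset_eq[OF f s] by simp
qed

lemma pick_min:
  assumes "U \<subset> V" "V \<subseteq> topspace X"
  obtains z where "z \<in> V - U" "\<forall>w\<in>V - U. card (minopen X z) \<le> card (minopen X w)"
proof -
  obtain z0 where "z0 \<in> V - U" using assms by blast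
  from ex_has_least_nat[of "\<lambda>z. z \<in> V - U", OF this, of "\<lambda>z. card (minopen X z)"]
  show ?thesis using that by blast
qed

lemma covers_step:
  assumes "covers X U V"
  obtains z where "z \<in> V - U" "\<And>w. w \<in> V - U \<Longrightarrow> minopen X w = minopen X z"
proof -
  have oU: "openin X U" and oV: "openin X V" and UV: "U \<subset> V"
    and nb: "\<not> (\<exists>W. openin X W \<and> U \<subset> W \<and> W \<subset> V)"
    using assms unfolding covers_def by auto
  have Vt: "V \<subseteq> topspace X" using oV openin_subset by blast
  obtain z where z: "z \<in> V - U" "\<forall>w\<in>V - U. card (minopen X z) \<le> card (minopen X w)"
    using pick_min[OF UV Vt] by blast
  have zt: "z \<in> topspace X" using z Vt by blast
  define W where "W = U \<union> minopen X z"
  have oW: "openin X W" unfolding W_def using oU mo_open[OF zt] by blast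
  have "U \<subset> W" unfolding W_def using z mo_mem[OF zt] by blast
  moreover have "W \<subseteq> V" unfolding W_def using UV mo_least[OF oV] z by blast
  ultimately have WV: "W = V" using nb oW by blast
  show ?thesis
  proof (rule that[OF z(1)])
    fix w assume w: "w \<in> V - U"
    then have "w \<in> minopen X z" using WV unfolding W_def by blast
    then show "minopen X w = minopen X z" using minim_class[OF zt z(2) w] by blast
  qed
qed

lemma covers_card:
  assumes "covers X U V"
  shows "card (EC X ` (V - A)) \<le> card (EC X ` (U - A)) + 1"
proof -
  obtain z where z: "z \<in> V - U" "\<And>w. w \<in> V - U \<Longrightarrow> minopen X w = minopen X z"
    using covers_step[OF assms] by blast
  have Vt: "V \<subseteq> topspace X" using assms openin_subset unfolding covers_def by blast
  have "EC X ` (V - A) \<subseteq> insert (EC X z) (EC X ` (U - A))"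
  proof
    fix K assume "K \<in> EC X ` (V - A)"
    then obtain w where w: "w \<in> V - A" "K = EC X w" by blast
    show "K \<in> insert (EC X z) (EC X ` (U - A))"
    proof (cases "w \<in> U")
      case True then show ?thesis using w by blast
    next
      case False
      then have "minopen X w = minopen X z" using z w by blast
      then have "EC X w = EC X z" using EC_eq w z Vt by blast
      then show ?thesis using w by blast
    qed
  qed
  moreover have "finite (EC X ` (U - A))"
  proof -
    have "U \<subseteq> topspace X" using assms Vt unfolding covers_def by blast
    then show ?thesis by (intro finite_imageI finite_Diff) (rule finite_subset[OF _ fin])
  qed
  ultimately show ?thesis
  proof -
    assume a: "EC X ` (V - A) \<subseteq> insert (EC X z) (EC X ` (U - A))" and f: "finite (EC X ` (U - A))"
    have "card (EC X ` (V - A)) \<le> card (insert (EC X z) (EC X ` (U - A)))"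
      using card_mono[OF _ a] f by blast
    also have "\<dots> \<le> card (EC X ` (U - A)) + 1" using f by (simp add: card_insert_if)
    finally show ?thesis .
  qed
qed

lemma cch_cov: "cch X us \<Longrightarrow> Suc j < length us \<Longrightarrow> covers X (us ! j) (us ! Suc j)"
  unfolding cch_iff covers_def by auto

lemma cch_lower:
  assumes "cch X us"
  shows "k < length us \<Longrightarrow>
     hd us \<subseteq> us ! k \<and> card (EC X ` (us ! k - A)) \<le> card (EC X ` (hd us - A)) + k"
proof (induction k)
  case 0
  then show ?case using assms by (cases us) auto
next
  case (Suc k)
  then have IH: "hd us \<subseteq> us ! k \<and> card (EC X ` (us ! k - A)) \<le> card (EC X ` (hd us - A)) + k"
    by simp
  have c: "covers X (us ! k) (us ! Suc k)" using cch_cov[OF assms Suc.prems] .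
  then have "us ! k \<subseteq> us ! Suc k" unfolding covers_def by blast
  moreover have "card (EC X ` (us ! Suc k - A)) \<le> card (EC X ` (us ! k - A)) + 1"
    using covers_card[OF c] .
  ultimately show ?case using IH by auto
qed


lemma chain_exists:
  assumes "openin X U" "openin X W" "U \<subseteq> W"
  shows "\<exists>us. cch X us \<and> hd us = U \<and> last us = W \<and> length us = card (EC X ` (W - U)) + 1"
  using assms
proof (induction "card (W - U)" arbitrary: U rule: less_induct)
  case less
  show ?case
  proof (cases "U = W")
    case True then show ?thesis using less.prems by (intro exI[of _ "[U]"]) simp
  next
    case False
    have UW: "U \<subset> W" using less.prems False by blast
    have Wt: "W \<subseteq> topspace X" using less.prems(2) openin_subset by blast
    obtain z where z: "z \<in> W - U" "\<forall>w\<in>W - U. card (minopen X z) \<le> card (minopen X w)"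
      using pick_min[OF UW Wt] by blast
    have zt: "z \<in> topspace X" using z Wt by blast
    define V where "V = U \<union> minopen X z"
    have oV: "openin X V" unfolding V_def using less.prems(1) mo_open[OF zt] by blast
    have VW: "V \<subseteq> W" unfolding V_def using less.prems mo_least[of W z] z by blast
    have UV: "U \<subset> V" unfolding V_def using z mo_mem[OF zt] by blast
    have cls: "minopen X w = minopen X z" if w: "w \<in> V - U" for w
    proof -
      have "w \<in> minopen X z" "w \<in> W - U" using w VW unfolding V_def by auto
      then show "minopen X w = minopen X z" using minim_class[OF zt z(2)] by blast
    qed
    have cov: "covers X U V"
      unfolding covers_def
    proof (intro conjI less.prems(1) oV UV notI)
      assume "\<exists>W'. openin X W' \<and> U \<subset> W' \<and> W' \<subset> V"
      then obtain W' where W': "openin X W'" "U \<subset> W'" "W' \<subset> V" by blast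
      then obtain w where w: "w \<in> W' - U" by blast
      then have "minopen X w = minopen X z" using cls W' by blast
      moreover have "minopen X w \<subseteq> W'" using mo_least[OF W'(1)] w by blast
      ultimately have "V \<subseteq> W'" unfolding V_def using W'(2) by blast
      then show False using W'(3) by blast
    qed
    have "W - V \<subset> W - U" using UV VW z unfolding V_def using mo_mem[OF zt] by blast
    moreover have "finite (W - U)" using Wt fin finite_subset by blast
    ultimately have lt: "card (W - V) < card (W - U)" by (rule psubset_card_mono[rotated])
    obtain vs where vs: "cch X vs" "hd vs = V" "last vs = W" "length vs = card (EC X ` (W - V)) + 1"
      using less.hyps[OF lt oV less.prems(2) VW] by blast
    have eq: "EC X ` (W - U) = insert (EC X z) (EC X ` (W - V))"
    proof
      show "EC X ` (W - U) \<subseteq> insert (EC X z) (EC X ` (W - V))"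
      proof
        fix K assume "K \<in> EC X ` (W - U)"
        then obtain w where w: "w \<in> W - U" "K = EC X w" by blast
        show "K \<in> insert (EC X z) (EC X ` (W - V))"
        proof (cases "w \<in> V")
          case True
          then have "minopen X w = minopen X z" using cls w by blast
          then have "EC X w = EC X z" using EC_eq w zt Wt by blast
          then show ?thesis using w by blast
        next
          case False then show ?thesis using w by blast
        qed
      qed
      show "insert (EC X z) (EC X ` (W - V)) \<subseteq> EC X ` (W - U)"
        using z UV by blast
    qed
    have nin: "EC X z \<notin> EC X ` (W - V)"
    proof
      assume "EC X z \<in> EC X ` (W - V)"
      then obtain w where w: "w \<in> W - V" "EC X z = EC X w" by blast
      then have "minopen X z = minopen X w" using EC_eq zt Wt by blast
      then have "w \<in> minopen X z" using mo_mem w Wt by blast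
      then show False using w unfolding V_def by blast
    qed
    have fin2: "finite (EC X ` (W - V))"
      by (intro finite_imageI finite_Diff) (rule finite_subset[OF Wt fin])
    have c2: "card (EC X ` (W - U)) = card (EC X ` (W - V)) + 1"
      unfolding eq using nin fin2 by simp
    obtain r where r: "vs = V # r" using vs by (cases vs) auto
    show ?thesis
      by (rule exI[of _ "U # vs"]) (use vs cov c2 r in auto)
  qed
qed

lemma Psi_formula:
  assumes xt: "x \<in> topspace X" and yt: "y \<in> topspace X"
  shows "Psi X x y = card (EC X ` (minopen X y - minopen X x))"
proof -
  define k0 where "k0 = card (EC X ` (minopen X y - minopen X x))"
  define U where "U = minopen X x"
  define M where "M = U \<union> minopen X y"
  have oU: "openin X U" unfolding U_def using mo_open[OF xt] .
  have oM: "openin X M" unfolding M_def using oU mo_open[OF yt] by blast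
  obtain c1 where c1: "cch X c1" "hd c1 = U" "last c1 = M" "length c1 = card (EC X ` (M - U)) + 1"
    using chain_exists[OF oU oM] unfolding M_def by blast
  have Mt: "M \<subseteq> topspace X" using oM openin_subset by blast
  obtain c2 where c2: "cch X c2" "hd c2 = M" "last c2 = topspace X"
    using chain_exists[OF oM openin_topspace Mt] by blast
  define us where "us = c1 @ tl c2"
  have ap: "cch X us \<and> last us = topspace X \<and> hd us = U"
    using cch_append[OF c1(1) c2(1)] c1 c2 unfolding us_def by simp
  have "M - U = minopen X y - minopen X x" unfolding M_def U_def by blast
  then have len: "length c1 = k0 + 1" using c1(4) unfolding k0_def by simp
  have "us ! k0 = c1 ! k0" unfolding us_def using len by (simp add: nth_append)
  also have "\<dots> = M"
  proof -
    have "c1 \<noteq> []" using len by auto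
    then have "last c1 = c1 ! k0" using len by (simp add: last_conv_nth)
    then show ?thesis using c1(3) by simp
  qed
  finally have "y \<in> us ! k0" unfolding M_def using mo_mem[OF yt] by blast
  moreover have "k0 < length us" unfolding us_def using len by simp
  moreover have "nested_seq X x us" unfolding nested_seq_cch using ap U_def by simp
  ultimately have ex: "\<exists>us. nested_seq X x us \<and> k0 < length us \<and> y \<in> us ! k0" by blast
  have lb: "k0 \<le> k" if hk: "\<exists>us. nested_seq X x us \<and> k < length us \<and> y \<in> us ! k" for k
  proof -
    obtain vs where vs: "nested_seq X x vs" "k < length vs" "y \<in> vs ! k" using hk by blast
    have ch: "cch X vs" and hv: "hd vs = U" using vs(1) unfolding nested_seq_cch U_def by auto
    have L: "hd vs \<subseteq> vs ! k \<and> card (EC X ` (vs ! k - U)) \<le> card (EC X ` (hd vs - U)) + k"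
      using cch_lower[OF ch vs(2)] .
    have ok: "openin X (vs ! k)" using ch vs(2) unfolding cch_iff by blast
    have "minopen X y \<subseteq> vs ! k" using mo_least[OF ok vs(3)] .
    then have sub: "EC X ` (minopen X y - U) \<subseteq> EC X ` (vs ! k - U)" by blast
    have "finite (EC X ` (vs ! k - U))"
      using ok by (intro finite_imageI finite_Diff) (rule finite_subset[OF openin_subset fin])
    then have "k0 \<le> card (EC X ` (vs ! k - U))" unfolding k0_def U_def[symmetric] using card_mono sub by blast
    also have "\<dots> \<le> k" using L hv by simp
    finally show ?thesis .
  qed
  show ?thesis unfolding Psi_def k0_def[symmetric]
    by (rule Least_equality) (use ex lb in auto)
qed


lemma Psi_zero:
  assumes "x \<in> topspace X" "y \<in> topspace X"
  shows "Psi X x y = 0 \<longleftrightarrow> y \<in> minopen X x"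
proof -
  have f: "finite (EC X ` (minopen X y - minopen X x))"
    by (intro finite_imageI finite_Diff) (rule finite_subset[OF mo_sub[OF assms(2)] fin])
  have "Psi X x y = 0 \<longleftrightarrow> minopen X y \<subseteq> minopen X x"
    unfolding Psi_formula[OF assms] using f by auto
  also have "\<dots> \<longleftrightarrow> y \<in> minopen X x" using mo_mem[OF assms(2)] mo_mono[OF assms(1)] by blast
  finally show ?thesis .
qed

lemma sim_class_EC:
  assumes "x \<in> topspace X"
  shows "sim_class X x = EC X x"
proof -
  have "psi_sim X x y \<longleftrightarrow> minopen X y = minopen X x" if "y \<in> topspace X" for y
    unfolding psi_sim_def using Psi_zero[OF assms that] Psi_zero[OF that assms]
      mo_mem[OF assms] mo_mem[OF that] mo_mono[OF assms] mo_mono[OF that] by blast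
  then show ?thesis unfolding sim_class_def EC_def by auto
qed

lemma quot_EC:
  assumes "c \<in> topspace X"
  shows "quot_minopen X c = EC X ` minopen X c"
  unfolding quot_minopen_def
  by (rule image_cong[OF refl]) (use sim_class_EC mo_sub[OF assms] in blast)

lemma sat_img:
  assumes "a \<in> topspace X" "z \<in> topspace X"
  shows "EC X z \<in> EC X ` minopen X a \<longleftrightarrow> z \<in> minopen X a"
  using sat[OF mo_open[OF assms(1)] assms(2)] by blast

lemma Psi_card:
  assumes "a \<in> topspace X" "c \<in> topspace X"
  shows "Psi X a c = card (EC X ` minopen X c) - card (EC X ` minopen X c \<inter> EC X ` minopen X a)"
proof -
  have "EC X ` (minopen X c - minopen X a) = EC X ` minopen X c - EC X ` minopen X a"
    using sat_img[OF assms(1)] mo_sub[OF assms(2)] by blast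
  moreover have "finite (EC X ` minopen X c \<inter> EC X ` minopen X a)"
    by (intro finite_Int disjI1 finite_imageI) (rule finite_subset[OF mo_sub[OF assms(2)] fin])
  ultimately show ?thesis unfolding Psi_formula[OF assms] by (simp add: card_Diff_subset_Int)
qed

lemma fin_img: "c \<in> topspace X \<Longrightarrow> finite (EC X ` minopen X c)"
  by (intro finite_imageI) (rule finite_subset[OF mo_sub fin])

end


lemma mo_prod:
  assumes fX: "finite (topspace X)" and fY: "finite (topspace Y)"
    and c: "c \<in> topspace X" and d: "d \<in> topspace Y"
  shows "minopen (prod_topology X Y) (c, d) = minopen X c \<times> minopen Y d"
proof
  have o1: "openin (prod_topology X Y) (minopen X c \<times> minopen Y d)"
    using mo_open[OF fX c] mo_open[OF fY d] by (simp add: openin_prod_Times_iff)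
  have m1: "(c, d) \<in> minopen X c \<times> minopen Y d" using mo_mem[OF fX c] mo_mem[OF fY d] by blast
  have fP: "finite (topspace (prod_topology X Y))" using fX fY by simp
  show "minopen (prod_topology X Y) (c, d) \<subseteq> minopen X c \<times> minopen Y d"
    by (rule mo_least[OF fP o1 m1])
next
  show "minopen X c \<times> minopen Y d \<subseteq> minopen (prod_topology X Y) (c, d)"
    unfolding minopen_def[of "prod_topology X Y"]
  proof (rule Inter_greatest)
    fix S assume "S \<in> {V. openin (prod_topology X Y) V \<and> (c, d) \<in> V}"
    then have S: "openin (prod_topology X Y) S" "(c, d) \<in> S" by auto
    have "\<exists>U V. openin X U \<and> openin Y V \<and> c \<in> U \<and> d \<in> V \<and> U \<times> V \<subseteq> S"
      using S(1)[unfolded openin_prod_topology_alt, rule_format, OF S(2)] .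
    then obtain U V where UV: "openin X U" "openin Y V" "c \<in> U" "d \<in> V" "U \<times> V \<subseteq> S"
      by blast
    have "minopen X c \<subseteq> U" using mo_least[OF fX UV(1) UV(3)] .
    moreover have "minopen Y d \<subseteq> V" using mo_least[OF fY UV(2) UV(4)] .
    ultimately show "minopen X c \<times> minopen Y d \<subseteq> S" using UV(5) by blast
  qed
qed

lemma EC_prod:
  fixes X :: "'a topology" and Y :: "'b topology"
  assumes fX: "finite (topspace X)" and fY: "finite (topspace Y)"
    and z: "z \<in> topspace X" and w: "w \<in> topspace Y"
  shows "EC (prod_topology X Y) (z, w) = EC X z \<times> EC Y w"
proof -
  have "minopen (prod_topology X Y) (z', w') = minopen (prod_topology X Y) (z, w) \<longleftrightarrow>
        minopen X z' = minopen X z \<and> minopen Y w' = minopen Y w"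
    if "z' \<in> topspace X" "w' \<in> topspace Y" for z' w'
    unfolding mo_prod[OF fX fY that] mo_prod[OF fX fY z w] times_eq_iff
    using mo_mem[OF fX] mo_mem[OF fY] that z w by blast
  note H = this
  show ?thesis
  proof (rule set_eqI)
    fix p :: "'a \<times> 'b"
    obtain z' w' where p: "p = (z', w')" by (cases p)
    have "(z',w') \<in> EC (prod_topology X Y) (z,w) \<longleftrightarrow> z' \<in> topspace X \<and> w' \<in> topspace Y \<and>
        minopen (prod_topology X Y) (z',w') = minopen (prod_topology X Y) (z,w)"
      unfolding EC_def by simp
    moreover have "(z',w') \<in> EC X z \<times> EC Y w \<longleftrightarrow> z' \<in> topspace X \<and> minopen X z' = minopen X z \<and>
        w' \<in> topspace Y \<and> minopen Y w' = minopen Y w"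
      unfolding EC_def by simp
    ultimately show "p \<in> EC (prod_topology X Y) (z, w) \<longleftrightarrow> p \<in> EC X z \<times> EC Y w"
      using H[of z' w'] unfolding p by blast
  qed
qed

theorem theorem4p1:
  fixes X :: "'a topology" and Y :: "'b topology"
  assumes "finite (topspace X)" and "finite (topspace Y)"
    and "a \<in> topspace X" and "c \<in> topspace X"
    and "b \<in> topspace Y" and "d \<in> topspace Y"
  shows "int (Psi (prod_topology X Y) (a, b) (c, d)) =
           int (Psi X a c) * int (card (quot_minopen Y d))
         + int (Psi Y b d) * int (card (quot_minopen X c))
         - int (Psi X a c) * int (Psi Y b d)"
proof -
  note fX = assms(1) and fY = assms(2) and a = assms(3) and c = assms(4) and b = assms(5) and d = assms(6)
  let ?P = "prod_topology X Y"
  have fP: "finite (topspace ?P)" using fX fY by simp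
  define A where "A = EC X ` minopen X c"
  define A' where "A' = EC X ` minopen X a"
  define B where "B = EC Y ` minopen Y d"
  define B' where "B' = EC Y ` minopen Y b"
  define f where "f = (\<lambda>(K :: 'a set, L :: 'b set). K \<times> L)"
  have cX: "z \<in> topspace X" if "z \<in> minopen X c" for z using mo_sub[OF fX c] that by blast
  have cY: "w \<in> topspace Y" if "w \<in> minopen Y d" for w using mo_sub[OF fY d] that by blast
  have eq: "EC ?P ` (minopen ?P (c, d) - minopen ?P (a, b)) = f ` (A \<times> B - A' \<times> B')"
  proof
    show "EC ?P ` (minopen ?P (c, d) - minopen ?P (a, b)) \<subseteq> f ` (A \<times> B - A' \<times> B')"
    proof
      fix K assume "K \<in> EC ?P ` (minopen ?P (c, d) - minopen ?P (a, b))"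
      then obtain z w where zw: "z \<in> minopen X c" "w \<in> minopen Y d"
        "\<not> (z \<in> minopen X a \<and> w \<in> minopen Y b)" "K = EC ?P (z, w)"
        unfolding mo_prod[OF fX fY c d] mo_prod[OF fX fY a b] by blast
      have K: "K = f (EC X z, EC Y w)" using EC_prod[OF fX fY cX[OF zw(1)] cY[OF zw(2)]] zw(4)
        unfolding f_def by simp
      have "(EC X z, EC Y w) \<notin> A' \<times> B'"
        using sat_img[OF fX a cX[OF zw(1)]] sat_img[OF fY b cY[OF zw(2)]] zw(3)
        unfolding A'_def B'_def by blast
      then show "K \<in> f ` (A \<times> B - A' \<times> B')" using K zw unfolding A_def B_def by blast
    qed
    show "f ` (A \<times> B - A' \<times> B') \<subseteq> EC ?P ` (minopen ?P (c, d) - minopen ?P (a, b))"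
    proof
      fix K assume "K \<in> f ` (A \<times> B - A' \<times> B')"
      then obtain z w where zw: "z \<in> minopen X c" "w \<in> minopen Y d"
        "(EC X z, EC Y w) \<notin> A' \<times> B'" "K = f (EC X z, EC Y w)"
        unfolding A_def B_def by blast
      have K: "K = EC ?P (z, w)" using EC_prod[OF fX fY cX[OF zw(1)] cY[OF zw(2)]] zw(4)
        unfolding f_def by simp
      have "\<not> (z \<in> minopen X a \<and> w \<in> minopen Y b)"
        using sat_img[OF fX a cX[OF zw(1)]] sat_img[OF fY b cY[OF zw(2)]] zw(3)
        unfolding A'_def B'_def by blast
      then show "K \<in> EC ?P ` (minopen ?P (c, d) - minopen ?P (a, b))"
        unfolding mo_prod[OF fX fY c d] mo_prod[OF fX fY a b] K using zw(1,2) by blast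
    qed
  qed
  have inj: "inj_on f (A \<times> B - A' \<times> B')"
  proof (rule inj_onI)
    fix p q assume p: "p \<in> A \<times> B - A' \<times> B'" and q: "q \<in> A \<times> B - A' \<times> B'" and e: "f p = f q"
    have ne: "K \<noteq> {}" if "K \<in> A" for K using that mo_sub[OF fX c] EC_mem[OF fX] unfolding A_def by blast
    have ne2: "L \<noteq> {}" if "L \<in> B" for L using that mo_sub[OF fY d] EC_mem[OF fY] unfolding B_def by blast
    obtain K L K2 L2 where "p = (K, L)" "q = (K2, L2)" by (cases p, cases q) auto
    then show "p = q" using e p q ne ne2 unfolding f_def by (auto simp: times_eq_iff)
  qed
  have fA: "finite A" "finite A'" "finite B" "finite B'"
    unfolding A_def A'_def B_def B'_def using fin_img fX fY a b c d by auto
  have "Psi ?P (a, b) (c, d) = card (EC ?P ` (minopen ?P (c, d) - minopen ?P (a, b)))"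
    by (rule Psi_formula[OF fP]) (simp_all add: a b c d)
  also have "\<dots> = card (f ` (A \<times> B - A' \<times> B'))" unfolding eq ..
  also have "\<dots> = card (A \<times> B - A' \<times> B')" using card_image[OF inj] .
  also have "\<dots> = card A * card B - card (A \<inter> A') * card (B \<inter> B')"
    using fA by (simp add: card_Diff_subset_Int Times_Int_Times card_cartesian_product)
  finally have P: "Psi ?P (a, b) (c, d) = card A * card B - card (A \<inter> A') * card (B \<inter> B')" .
  have PX: "Psi X a c = card A - card (A \<inter> A')" unfolding A_def A'_def using Psi_card[OF fX a c] .
  have PY: "Psi Y b d = card B - card (B \<inter> B')" unfolding B_def B'_def using Psi_card[OF fY b d] .
  have QX: "card (quot_minopen X c) = card A" unfolding A_def quot_EC[OF fX c] ..
  have QY: "card (quot_minopen Y d) = card B" unfolding B_def quot_EC[OF fY d] ..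
  have l1: "card (A \<inter> A') \<le> card A" using fA by (simp add: card_mono)
  have l2: "card (B \<inter> B') \<le> card B" using fA by (simp add: card_mono)
  have l3: "card (A \<inter> A') * card (B \<inter> B') \<le> card A * card B" using l1 l2 by (rule mult_le_mono)
  show ?thesis unfolding P PX PY QX QY using l1 l2 l3
    by (simp add: of_nat_diff algebra_simps)
qed

end
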